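(* Let $q\in\Delta_1^m$ be a prior with $q_s>0$ for all $s\in[m]$, and assume $\mathcal{W}^{\theta_1}\neq\mathcal{W}^{\theta_2}$. Then there exists a signalling scheme $\Phi\in\mathbb{R}^{m\times m}$ (column-stochastic, with $m$ signals) that is $q$-identifying, i.e. $\mathcal{Q}_\Phi=\{q\}$.
   Context: Let $\mathcal{G}=(\mathcal{V},\mathcal{E})$ be a finite directed graph with an origin $v_o$ and a destination $v_d$, and let $\mathcal{P}$ be the (finite) set of acyclic directed paths from $v_o$ to $v_d$, $n=|\mathcal{P}|$. The set of feasible path-flows is $\mathcal{H}=\{f\in\mathbb{R}^n_{\ge0}:\sum_{p\in\mathcal{P}}f_p=1\}$. For a path-flow $f$, the flow on edge $e_k$ is $f_{e_k}=\sum_{p\ni e_k}f_p$. There is a finite set of states $\Theta=\{\theta_1,\dots,\theta_m\}$, $m\ge2$; in each state $\theta_s$ each edge $e_k$ has a known cost function $C^{\theta_s}_{e_k}:\mathbb{R}_{\ge0}\to\mathbb{R}_{\ge0}$ that is continuous and strictly increasing. The cost of path $p$ in state $\theta_s$ is $C^{\theta_s}_p(f)=\sum_{e_k\in p}C^{\theta_s}_{e_k}(f_{e_k})$. For $\varphi\in\Delta_1^m:=\{x\in\mathbb{R}^m_{\ge0}:\sum_i x_i=1\}$ the expected cost of path $p$ is $C^\varphi_p(f)=\sum_{s}\varphi_sC^{\theta_s}_p(f)$. A flow $f\in\mathcal{H}$ is a $\varphi$-based Wardrop equilibrium ($\varphi$-WE) if for all $p$ with $f_p>0$ we have $C^\varphi_p(f)\le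 C^\varphi_r(f)$ for all $r\in\mathcal{P}$; $\mathcal{W}^\varphi$ denotes the set of $\varphi$-WE. For each $s$, $\varphi^{\theta_s}$ is the distribution with $\varphi^{\theta_s}_s=1$ and $\mathcal{W}^{\theta_s}:=\mathcal{W}^{\varphi^{\theta_s}}$. A (public) signalling scheme with signals $\zeta^1,\dots,\zeta^z$ is a column-stochastic matrix $\Phi=(\phi^u_s)\in\mathbb{R}^{z\times m}_{\ge0}$, where $\phi^u_s$ is the probability of sending $\zeta^u$ in state $\theta_s$. Given the prior $q$, the posterior after $\zeta^u$ (when $\sum_\ell\phi^u_\ell q_\ell>0$) is $\widetilde q^{\zeta^u}_s=\phi^u_sq_s/\sum_\ell\phi^u_\ell q_\ell$, and the observed flow under $\zeta^u$ is some $\widetilde f^{\zeta^u}\in\mathcal{W}^{\widetilde q^{\zeta^u}}$. The set $\mathcal{Q}_\Phi$ consists of all $\psi\in\Delta_1^m$ such that for every signal $u$ (with $\sum_\ell\phi^u_\ell q_\ell>0$): $\sum_s\phi^u_s(C^{\theta_s}_p(\widetilde f^{\zeta^u})-C^{\theta_s}_r(\widetilde f^{\zeta^u}))\psi_s=0$ for all $p,r$ with $\widetilde f^{\zeta^u}_p,\widetilde f^{\zeta^u}_r>0$, and $\sum_s\phi^u_s(C^{\theta_s}_p(\widetilde f^{\zeta^u})-C^{\theta_s}_r(\widetilde f^{\zeta^u}))\psi_s\le0$ for all $p,r$ with $\widetilde f^{\zeta^u}_p>0$, $\widetilde f^{\zeta^u}_r=0$. (This set does not depend on which posterior-WE are observed.)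 $\Phi$ is called $q$-identifying if $\mathcal{Q}_\Phi=\{q\}$. *)

theory Defs
  imports Complex_Main
begin

definition od_paths :: "('v \<times> 'v) set \<Rightarrow> 'v \<Rightarrow> 'v \<Rightarrow> 'v list set" where
  "od_paths E vo vd = {vs. vs \<noteq> [] \<and> hd vs = vo \<and> last vs = vd \<and> distinct vs \<and>
      (\<forall>i. i + 1 < length vs \<longrightarrow> (vs ! i, vs ! (i + 1)) \<in> E)}"

definition path_edges :: "'v list \<Rightarrow> ('v \<times> 'v) set" where
  "path_edges vs = set (zip vs (tl vs))"

definition simplex :: "nat \<Rightarrow> (nat \<Rightarrow> real) set" where
  "simplex m = {x. (\<forall>s. m \<le> s \<longrightarrow> x s = 0) \<and> (\<forall>s<m. 0 \<le> x s) \<and> (\<Sum>s<m. x s) = 1}"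

definition feasible_flow :: "'p set \<Rightarrow> ('p \<Rightarrow> real) \<Rightarrow> bool" where
  "feasible_flow P f \<longleftrightarrow> (\<forall>p. p \<notin> P \<longrightarrow> f p = 0) \<and> (\<forall>p\<in>P. 0 \<le> f p) \<and> sum f P = 1"

definition edge_flow :: "'v list set \<Rightarrow> ('v list \<Rightarrow> real) \<Rightarrow> ('v \<times> 'v) \<Rightarrow> real" where
  "edge_flow P f e = (\<Sum>p\<in>P. if e \<in> path_edges p then f p else 0)"

definition path_cost :: "(nat \<Rightarrow> ('v \<times> 'v) \<Rightarrow> real \<Rightarrow> real) \<Rightarrow> nat \<Rightarrow> 'v list set
    \<Rightarrow> ('v list \<Rightarrow> real) \<Rightarrow> 'v list \<Rightarrow> real" where
  "path_cost C s P f p = (\<Sum>e\<in>path_edges p. C s e (edge_flow P f e))"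

definition exp_cost :: "nat \<Rightarrow> (nat \<Rightarrow> ('v \<times> 'v) \<Rightarrow> real \<Rightarrow> real) \<Rightarrow> (nat \<Rightarrow> real)
    \<Rightarrow> 'v list set \<Rightarrow> ('v list \<Rightarrow> real) \<Rightarrow> 'v list \<Rightarrow> real" where
  "exp_cost m C \<phi> P f p = (\<Sum>s<m. \<phi> s * path_cost C s P f p)"

definition WE :: "nat \<Rightarrow> (nat \<Rightarrow> ('v \<times> 'v) \<Rightarrow> real \<Rightarrow> real) \<Rightarrow> (nat \<Rightarrow> real)
    \<Rightarrow> 'v list set \<Rightarrow> ('v list \<Rightarrow> real) set" where
  "WE m C \<phi> P = {f. feasible_flow P f \<and>
     (\<forall>p\<in>P. 0 < f p \<longrightarrow> (\<forall>r\<in>P. exp_cost m C \<phi> P f p \<le> exp_cost m C \<phi> P f r))}"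

definition point_mass :: "nat \<Rightarrow> nat \<Rightarrow> real" where
  "point_mass s = (\<lambda>t. if t = s then 1 else 0)"

(* column-stochastic z x m matrix Phi u s = probability of signal u in state s *)
definition signalling_scheme :: "nat \<Rightarrow> nat \<Rightarrow> (nat \<Rightarrow> nat \<Rightarrow> real) \<Rightarrow> bool" where
  "signalling_scheme m z \<Phi> \<longleftrightarrow> (\<forall>u<z. \<forall>s<m. 0 \<le> \<Phi> u s) \<and> (\<forall>s<m. (\<Sum>u<z. \<Phi> u s) = 1)"

definition sig_prob :: "nat \<Rightarrow> (nat \<Rightarrow> real) \<Rightarrow> (nat \<Rightarrow> nat \<Rightarrow> real) \<Rightarrow> nat \<Rightarrow> real" where
  "sig_prob m q \<Phi> u = (\<Sum>l<m. \<Phi> u l * q l)"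

definition posterior :: "nat \<Rightarrow> (nat \<Rightarrow> real) \<Rightarrow> (nat \<Rightarrow> nat \<Rightarrow> real) \<Rightarrow> nat \<Rightarrow> nat \<Rightarrow> real" where
  "posterior m q \<Phi> u = (\<lambda>s. if s < m then \<Phi> u s * q s / sig_prob m q \<Phi> u else 0)"

(* Q_Phi, given the observed flows ft u under each signal u *)
definition Q_set :: "nat \<Rightarrow> nat \<Rightarrow> (nat \<Rightarrow> ('v \<times> 'v) \<Rightarrow> real \<Rightarrow> real) \<Rightarrow> 'v list set
    \<Rightarrow> (nat \<Rightarrow> real) \<Rightarrow> (nat \<Rightarrow> nat \<Rightarrow> real) \<Rightarrow> (nat \<Rightarrow> 'v list \<Rightarrow> real) \<Rightarrow> (nat \<Rightarrow> real) set" where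
  "Q_set m z C P q \<Phi> ft = {\<psi> \<in> simplex m. \<forall>u<z. 0 < sig_prob m q \<Phi> u \<longrightarrow>
     (\<forall>p\<in>P. \<forall>r\<in>P. 0 < ft u p \<longrightarrow>
        (0 < ft u r \<longrightarrow>
           (\<Sum>s<m. \<Phi> u s * (path_cost C s P (ft u) p - path_cost C s P (ft u) r) * \<psi> s) = 0) \<and>
        (ft u r = 0 \<longrightarrow>
           (\<Sum>s<m. \<Phi> u s * (path_cost C s P (ft u) p - path_cost C s P (ft u) r) * \<psi> s) \<le> 0))}"

(* q-identifying: Q_Phi = {q} for the observed posterior equilibria
   (any admissible choice of observed flows) *)
definition q_identifying :: "nat \<Rightarrow> nat \<Rightarrow> (nat \<Rightarrow> ('v \<times> 'v) \<Rightarrow> real \<Rightarrow> real) \<Rightarrow> 'v list set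
    \<Rightarrow> (nat \<Rightarrow> real) \<Rightarrow> (nat \<Rightarrow> nat \<Rightarrow> real) \<Rightarrow> bool" where
  "q_identifying m z C P q \<Phi> \<longleftrightarrow>
     (\<forall>ft. (\<forall>u<z. 0 < sig_prob m q \<Phi> u \<longrightarrow> ft u \<in> WE m C (posterior m q \<Phi> u) P)
        \<longrightarrow> Q_set m z C P q \<Phi> ft = {q})"

end

theory Submission
  imports Defs
begin

definition EEs :: "'v list set \<Rightarrow> ('v \<times> 'v) set" where
  "EEs P = \<Union>(path_edges ` P)"

definition wardrop :: "'p set \<Rightarrow> (('p \<Rightarrow> real) \<Rightarrow> 'p \<Rightarrow> real) \<Rightarrow> ('p \<Rightarrow> real) \<Rightarrow> bool" where
  "wardrop P K f \<longleftrightarrow> feasible_flow P f \<and> (\<forall>p\<in>P. 0 < f p \<longrightarrow> (\<forall>r\<in>P. K f p \<le> K f r))"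

definition mix where
  "mix C P a b w f p = (1 - w) * path_cost C a P f p + w * path_cost C b P f p"

lemma finite_path_edges[simp]: "finite (path_edges p)"
  by (simp add: path_edges_def)

lemma L1:
  assumes "finite P"
  shows "(\<Sum>p\<in>P. path_cost C s P f p * g p) =
         (\<Sum>e\<in>EEs P. C s e (edge_flow P f e) * edge_flow P g e)"
proof -
  have fE: "finite (EEs P)" using assms by (simp add: EEs_def)
  have "(\<Sum>p\<in>P. path_cost C s P f p * g p) =
        (\<Sum>p\<in>P. \<Sum>e\<in>EEs P. (if e \<in> path_edges p then C s e (edge_flow P f e) * g p else 0))"
  proof (rule sum.cong[OF refl])
    fix p assume p: "p \<in> P"
    have sub: "path_edges p \<subseteq> EEs P" using p by (auto simp: EEs_def)
    have "path_cost C s P f p * g p = (\<Sum>e\<in>path_edges p. C s e (edge_flow P f e) * g p)"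
      by (simp add: path_cost_def sum_distrib_right)
    also have "\<dots> = (\<Sum>e\<in>EEs P. (if e \<in> path_edges p then C s e (edge_flow P f e) * g p else 0))"
      using sum.inter_restrict[OF fE, of "\<lambda>e. C s e (edge_flow P f e) * g p" "path_edges p"] sub
      by (metis Int_absorb1)
    finally show "path_cost C s P f p * g p = \<dots>" .
  qed
  also have "\<dots> = (\<Sum>e\<in>EEs P. \<Sum>p\<in>P. (if e \<in> path_edges p then C s e (edge_flow P f e) * g p else 0))"
    by (rule sum.swap)
  also have "\<dots> = (\<Sum>e\<in>EEs P. C s e (edge_flow P f e) * edge_flow P g e)"
    by (auto simp: edge_flow_def sum_distrib_left intro!: sum.cong)
  finally show ?thesis .
qed

lemma edge_flow_diff: "edge_flow P (\<lambda>p. f p - g p) e = edge_flow P f e - edge_flow P g e"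
  unfolding edge_flow_def sum_subtractf[symmetric] by (rule sum.cong) auto

lemma edge_flow_nonneg: "\<forall>p\<in>P. 0 \<le> f p \<Longrightarrow> 0 \<le> edge_flow P f e"
  by (auto simp: edge_flow_def intro!: sum_nonneg)

lemma sm_prod:
  assumes "strict_mono_on {0..} h" "0 \<le> x" "0 \<le> (y::real)"
  shows "0 \<le> (h x - h y) * (x - y)" and "x \<noteq> y \<Longrightarrow> 0 < (h x - h y) * (x - y)"
proof -
  have 1: "x < y \<Longrightarrow> h x < h y" "y < x \<Longrightarrow> h y < h x"
    using assms by (auto simp: strict_mono_on_def)
  have 2: "x \<noteq> y \<Longrightarrow> 0 < (h x - h y) * (x - y)"
  proof -
    assume "x \<noteq> y"
    then consider "x < y" | "y < x" by linarith
    then show ?thesis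
    proof cases
      case 1 then have "h x - h y < 0" "x - y < 0" using \<open>x < y \<Longrightarrow> h x < h y\<close> by auto
      then show ?thesis by (simp add: mult_neg_neg)
    next
      case 2 then have "h x - h y > 0" "x - y > 0" using \<open>y < x \<Longrightarrow> h y < h x\<close> by auto
      then show ?thesis by simp
    qed
  qed
  then show "x \<noteq> y \<Longrightarrow> 0 < (h x - h y) * (x - y)" .
  show "0 \<le> (h x - h y) * (x - y)" using 2 by (cases "x = y") (auto intro: less_imp_le)
qed

definition Mon where
  "Mon C s P f g = (\<Sum>p\<in>P. (path_cost C s P f p - path_cost C s P g p) * (f p - g p))"

lemma Mon_edge:
  assumes "finite P"
  shows "Mon C s P f g = (\<Sum>e\<in>EEs P. (C s e (edge_flow P f e) - C s e (edge_flow P g e)) *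
             (edge_flow P f e - edge_flow P g e))"
proof -
  have "Mon C s P f g = (\<Sum>p\<in>P. path_cost C s P f p * (f p - g p)) - (\<Sum>p\<in>P. path_cost C s P g p * (f p - g p))"
    by (simp add: Mon_def left_diff_distrib sum_subtractf)
  also have "\<dots> = (\<Sum>e\<in>EEs P. C s e (edge_flow P f e) * (edge_flow P f e - edge_flow P g e))
     - (\<Sum>e\<in>EEs P. C s e (edge_flow P g e) * (edge_flow P f e - edge_flow P g e))"
    using L1[OF assms, of C s f "\<lambda>p. f p - g p"] L1[OF assms, of C s g "\<lambda>p. f p - g p"]
    by (simp add: edge_flow_diff)
  also have "\<dots> = (\<Sum>e\<in>EEs P. (C s e (edge_flow P f e) - C s e (edge_flow P g e)) *
             (edge_flow P f e - edge_flow P g e))" by (simp add: left_diff_distrib sum_subtractf)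
  finally show ?thesis .
qed

definition SM where "SM C P s \<longleftrightarrow> (\<forall>e\<in>EEs P. strict_mono_on {0..} (C s e))"

lemma Mon_nonneg:
  assumes "finite P" "SM C P s" "\<forall>p\<in>P. 0 \<le> f p" "\<forall>p\<in>P. 0 \<le> g p"
  shows "0 \<le> Mon C s P f g"
  unfolding Mon_edge[OF assms(1)]
  using assms by (auto intro!: sum_nonneg sm_prod(1) edge_flow_nonneg simp: SM_def)

lemma Mon_zero:
  assumes "finite P" "SM C P s" "\<forall>p\<in>P. 0 \<le> f p" "\<forall>p\<in>P. 0 \<le> g p"
    and "Mon C s P f g \<le> 0"
  shows "\<forall>e\<in>EEs P. edge_flow P f e = edge_flow P g e"
proof (rule ccontr)
  assume "\<not> ?thesis"
  then obtain e0 where e0: "e0 \<in> EEs P" "edge_flow P f e0 \<noteq> edge_flow P g e0" by auto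
  have fE: "finite (EEs P)" using assms(1) by (simp add: EEs_def)
  let ?F = "\<lambda>e. (C s e (edge_flow P f e) - C s e (edge_flow P g e)) * (edge_flow P f e - edge_flow P g e)"
  have nn: "\<forall>e\<in>EEs P. 0 \<le> ?F e"
    using assms by (auto intro!: sm_prod(1) edge_flow_nonneg simp: SM_def)
  have pos: "0 < ?F e0"
    using assms e0 by (auto intro!: sm_prod(2) edge_flow_nonneg simp: SM_def)
  have "?F e0 \<le> sum ?F (EEs P)"
    by (rule member_le_sum[OF e0(1)]) (use nn fE in auto)
  then have "0 < Mon C s P f g" using pos Mon_edge[OF assms(1)] by simp
  then show False using assms(5) by simp
qed

lemma cost_eq:
  assumes "\<forall>e\<in>EEs P. edge_flow P f e = edge_flow P g e" "p \<in> P"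
  shows "path_cost C s P f p = path_cost C s P g p"
  unfolding path_cost_def using assms by (auto simp: EEs_def intro!: sum.cong)

lemma feas_ex: "feasible_flow P f \<Longrightarrow> finite P \<Longrightarrow> \<exists>p\<in>P. 0 < f p"
proof (rule ccontr)
  assume a: "feasible_flow P f" "finite P" "\<not> (\<exists>p\<in>P. 0 < f p)"
  then have "\<forall>p\<in>P. f p = 0" by (force simp: feasible_flow_def)
  then have "sum f P = 0" by simp
  then show False using a by (simp add: feasible_flow_def)
qed

lemma H:
  assumes "feasible_flow P g" "\<forall>p\<in>P. 0 < g p \<longrightarrow> X p = c"
  shows "(\<Sum>p\<in>P. X p * g p) = c"
proof -
  have "(\<Sum>p\<in>P. X p * g p) = (\<Sum>p\<in>P. c * g p)"
  proof (rule sum.cong[OF refl])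
    fix p assume "p \<in> P"
    then show "X p * g p = c * g p" using assms by (cases "g p = 0") (auto simp: feasible_flow_def order_le_less)
  qed
  also have "\<dots> = c" using assms(1) by (simp add: feasible_flow_def sum_distrib_left[symmetric])
  finally show ?thesis .
qed

lemma Hge:
  assumes "feasible_flow P g" "\<forall>p\<in>P. c \<le> X p"
  shows "c \<le> (\<Sum>p\<in>P. X p * g p)"
proof -
  have "c = (\<Sum>p\<in>P. c * g p)" using assms(1) by (simp add: feasible_flow_def sum_distrib_left[symmetric])
  also have "\<dots> \<le> (\<Sum>p\<in>P. X p * g p)"
    using assms by (auto intro!: sum_mono mult_right_mono simp: feasible_flow_def)
  finally show ?thesis .
qed

lemma VI:
  assumes "finite P" "wardrop P K f" "feasible_flow P g"
  shows "(\<Sum>p\<in>P. K f p * f p) \<le> (\<Sum>p\<in>P. K f p * g p)"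
proof -
  obtain p0 where p0: "p0 \<in> P" "0 < f p0" using feas_ex assms unfolding wardrop_def by blast
  have "(\<Sum>p\<in>P. K f p * f p) = K f p0"
    using assms(2) p0 by (intro H) (auto simp: wardrop_def intro: order_antisym)
  also have "\<dots> \<le> (\<Sum>p\<in>P. K f p * g p)"
    using assms p0 by (intro Hge) (auto simp: wardrop_def)
  finally show ?thesis .
qed

lemma VI2:
  assumes "finite P" "wardrop P K f" "wardrop P K g"
  shows "(\<Sum>p\<in>P. (K f p - K g p) * (f p - g p)) \<le> 0"
proof -
  have "(\<Sum>p\<in>P. (K f p - K g p) * (f p - g p)) =
     (\<Sum>p\<in>P. (K f p * f p - K f p * g p) + (K g p * g p - K g p * f p))"
    by (rule sum.cong) (simp_all add: algebra_simps)
  also have "\<dots> = ((\<Sum>p\<in>P. K f p * f p) - (\<Sum>p\<in>P. K f p * g p)) + ((\<Sum>p\<in>P. K g p * g p) - (\<Sum>p\<in>P. K g p * f p))"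
    by (simp add: sum.distrib sum_subtractf)
  also have "\<dots> \<le> 0"
    using VI[OF assms(1,2), of g] VI[OF assms(1,3), of f] assms(2,3) by (simp add: wardrop_def)
  finally show ?thesis .
qed

lemma mix_Mon:
  "(\<Sum>p\<in>P. (mix C P a b w f p - mix C P a b w g p) * (f p - g p)) = (1 - w) * Mon C a P f g + w * Mon C b P f g"
  unfolding Mon_def mix_def sum_distrib_left sum.distrib[symmetric]
  by (rule sum.cong) (simp_all add: algebra_simps)

lemma L4:
  assumes "finite P" "SM C P a" "SM C P b" "0 \<le> w" "w \<le> 1"
    "wardrop P (mix C P a b w) f" "wardrop P (mix C P a b w) g"
  shows "\<forall>e\<in>EEs P. edge_flow P f e = edge_flow P g e"
proof -
  have nf: "\<forall>p\<in>P. 0 \<le> f p" "\<forall>p\<in>P. 0 \<le> g p" using assms(6,7) by (auto simp: wardrop_def feasible_flow_def)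
  have ma: "0 \<le> Mon C a P f g" and mb: "0 \<le> Mon C b P f g" using Mon_nonneg assms nf by blast+
  have le: "(1 - w) * Mon C a P f g + w * Mon C b P f g \<le> 0"
    using VI2[OF assms(1,6,7)] mix_Mon by metis
  have t1: "0 \<le> (1 - w) * Mon C a P f g" "0 \<le> w * Mon C b P f g" using ma mb assms(4,5) by auto
  show ?thesis
  proof (cases "w < 1")
    case True
    have "(1 - w) * Mon C a P f g \<le> 0" using le t1 by linarith
    then have "Mon C a P f g \<le> 0" using True
      by (simp add: mult_le_0_iff)
    then show ?thesis using Mon_zero assms nf by blast
  next
    case False
    then have "w = 1" using assms by simp
    then have "Mon C b P f g \<le> 0" using le t1 by simp
    then show ?thesis using Mon_zero assms nf by blast
  qed
qed

definition supp where "supp P f = {p\<in>P. 0 < f p}"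

lemma L5:
  assumes "finite P" "SM C P a" "feasible_flow P f" "feasible_flow P g" "supp P f = supp P g"
    "\<forall>p\<in>P. \<forall>r\<in>P. 0 < f p \<longrightarrow> 0 < f r \<longrightarrow> path_cost C a P f p = path_cost C a P f r"
    "\<forall>p\<in>P. \<forall>r\<in>P. 0 < g p \<longrightarrow> 0 < g r \<longrightarrow> path_cost C a P g p = path_cost C a P g r"
  shows "\<forall>e\<in>EEs P. edge_flow P f e = edge_flow P g e"
proof -
  obtain p0 where p0: "p0 \<in> P" "0 < f p0" using feas_ex assms by blast
  have g0: "0 < g p0" using assms(5) p0 by (auto simp: supp_def)
  have sf: "\<forall>p\<in>P. 0 < f p \<longleftrightarrow> 0 < g p" using assms(5) by (auto simp: supp_def set_eq_iff)
  have ff: "\<forall>p\<in>P. 0 < f p \<longrightarrow> path_cost C a P f p = path_cost C a P f p0"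
    using assms(6) p0 by blast
  have gg: "\<forall>p\<in>P. 0 < g p \<longrightarrow> path_cost C a P g p = path_cost C a P g p0"
    using assms(7) p0 g0 by blast
  have a1: "(\<Sum>p\<in>P. path_cost C a P f p * f p) = path_cost C a P f p0"
    by (rule H[OF assms(3) ff])
  have a2: "(\<Sum>p\<in>P. path_cost C a P f p * g p) = path_cost C a P f p0"
    by (rule H[OF assms(4)]) (use ff sf in blast)
  have a3: "(\<Sum>p\<in>P. path_cost C a P g p * g p) = path_cost C a P g p0"
    by (rule H[OF assms(4) gg])
  have a4: "(\<Sum>p\<in>P. path_cost C a P g p * f p) = path_cost C a P g p0"
    by (rule H[OF assms(3)]) (use gg sf in blast)
  have "Mon C a P f g = ((\<Sum>p\<in>P. path_cost C a P f p * f p) - (\<Sum>p\<in>P. path_cost C a P f p * g p))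
      + ((\<Sum>p\<in>P. path_cost C a P g p * g p) - (\<Sum>p\<in>P. path_cost C a P g p * f p))"
    unfolding Mon_def sum_subtractf[symmetric] sum.distrib[symmetric]
    by (rule sum.cong) (simp_all add: algebra_simps)
  then have "Mon C a P f g \<le> 0" using a1 a2 a3 a4 by simp
  moreover have "\<forall>p\<in>P. 0 \<le> f p" "\<forall>p\<in>P. 0 \<le> g p" using assms(3,4) by (simp_all add: feasible_flow_def)
  ultimately show ?thesis using Mon_zero[OF assms(1,2)] by blast
qed

lemma mix0: "mix C P a b 0 = (\<lambda>f p. path_cost C a P f p)"
  by (auto simp: mix_def fun_eq_iff)
lemma mix1: "mix C P a b 1 = (\<lambda>f p. path_cost C b P f p)"
  by (auto simp: mix_def fun_eq_iff)

lemma sum_edge_swap: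
  assumes "finite P" "\<forall>e\<in>EEs P. edge_flow P f e = edge_flow P g e"
  shows "(\<Sum>p\<in>P. path_cost C s P f p * g p) = (\<Sum>p\<in>P. path_cost C s P f p * f p)"
  unfolding L1[OF assms(1)] using assms(2) by (auto intro!: sum.cong)

lemma L6:
  assumes "finite P" "SM C P a" "SM C P b"
    "wardrop P (\<lambda>f p. path_cost C a P f p) f" "wardrop P (\<lambda>f p. path_cost C b P f p) f"
    "wardrop P (\<lambda>f p. path_cost C a P f p) g"
  shows "wardrop P (\<lambda>f p. path_cost C b P f p) g"
proof -
  have ee: "\<forall>e\<in>EEs P. edge_flow P f e = edge_flow P g e"
    using L4[OF assms(1,2,3), of 0 f g] assms(4,6) by (simp add: mix0)
  have ce: "\<forall>p\<in>P. path_cost C b P g p = path_cost C b P f p"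
    using cost_eq[OF ee] by (simp add: eq_commute)
  have fg: "feasible_flow P f" "feasible_flow P g" using assms(4,6) by (auto simp: wardrop_def)
  obtain p0 where p0: "p0 \<in> P" "0 < f p0" using feas_ex fg assms(1) by blast
  define lm where "lm = path_cost C b P f p0"
  have w5: "\<forall>p\<in>P. 0 < f p \<longrightarrow> (\<forall>r\<in>P. path_cost C b P f p \<le> path_cost C b P f r)"
    using assms(5) unfolding wardrop_def by blast
  have lam: "\<forall>r\<in>P. lm \<le> path_cost C b P f r" using w5 p0 unfolding lm_def by blast
  have used: "\<forall>p\<in>P. 0 < f p \<longrightarrow> path_cost C b P f p = lm"
  proof (intro ballI impI)
    fix p assume "p \<in> P" "0 < f p"
    then have "path_cost C b P f p \<le> lm" using w5 p0 unfolding lm_def by blast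
    then show "path_cost C b P f p = lm" using lam \<open>p \<in> P\<close> by (meson order_antisym)
  qed
  have s1: "(\<Sum>p\<in>P. path_cost C b P f p * g p) = lm"
    using sum_edge_swap[OF assms(1) ee, of C b] H[OF fg(1) used] by simp
  have s2: "(\<Sum>p\<in>P. lm * g p) = lm" using fg(2) by (simp add: feasible_flow_def sum_distrib_left[symmetric])
  have "(\<Sum>p\<in>P. (path_cost C b P f p - lm) * g p) = 0"
    using s1 s2 by (simp add: left_diff_distrib sum_subtractf)
  moreover have nn: "\<And>p. p \<in> P \<Longrightarrow> 0 \<le> (path_cost C b P f p - lm) * g p"
    using lam fg(2) unfolding feasible_flow_def by (simp add: mult_nonneg_nonneg)
  ultimately have z: "\<forall>p\<in>P. (path_cost C b P f p - lm) * g p = 0"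
    using sum_nonneg_eq_0_iff[OF assms(1), of "\<lambda>p. (path_cost C b P f p - lm) * g p", OF nn] by simp
  show ?thesis unfolding wardrop_def
  proof (intro conjI fg ballI impI)
    fix p r assume pr: "p \<in> P" "0 < g p" "r \<in> P"
    then have "(path_cost C b P f p - lm) * g p = 0" using bspec[OF z pr(1)] by simp
    then have "path_cost C b P f p = lm" using pr(2) by simp
    then show "path_cost C b P g p \<le> path_cost C b P g r" using ce lam pr by simp
  qed
qed

definition U2 where "U2 C P a b f \<longleftrightarrow> (\<forall>p\<in>P. \<forall>r\<in>P. 0 < f p \<longrightarrow> 0 < f r \<longrightarrow>
   path_cost C a P f p = path_cost C a P f r \<and> path_cost C b P f p = path_cost C b P f r)"

definition TT where "TT C P a b f = {w \<in> {0..1::real}. wardrop P (mix C P a b w) f}"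

lemma W_char:
  assumes "feasible_flow P f" "U2 C P a b f" "p0 \<in> P" "0 < f p0"
  shows "wardrop P (mix C P a b w) f \<longleftrightarrow> (\<forall>r\<in>P. mix C P a b w f p0 \<le> mix C P a b w f r)"
proof
  assume "wardrop P (mix C P a b w) f"
  then show "\<forall>r\<in>P. mix C P a b w f p0 \<le> mix C P a b w f r" using assms(3,4) unfolding wardrop_def by blast
next
  assume R: "\<forall>r\<in>P. mix C P a b w f p0 \<le> mix C P a b w f r"
  show "wardrop P (mix C P a b w) f" unfolding wardrop_def
  proof (intro conjI assms(1) ballI impI)
    fix p r assume pr: "p\<in>P" "0<f p" "r\<in>P"
    have "path_cost C a P f p = path_cost C a P f p0 \<and> path_cost C b P f p = path_cost C b P f p0"
      using assms(2,3,4) pr(1,2) unfolding U2_def by blast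
    then have "mix C P a b w f p = mix C P a b w f p0" by (simp add: mix_def)
    then show "mix C P a b w f p \<le> mix C P a b w f r" using R pr(3) by simp
  qed
qed

lemma U2_a: "U2 C P a b f \<Longrightarrow> p0 \<in> P \<Longrightarrow> 0 < f p0 \<Longrightarrow> \<forall>p\<in>P. 0 < f p \<longrightarrow> path_cost C a P f p = path_cost C a P f p0"
  unfolding U2_def by blast
lemma U2_b: "U2 C P a b f \<Longrightarrow> p0 \<in> P \<Longrightarrow> 0 < f p0 \<Longrightarrow> \<forall>p\<in>P. 0 < f p \<longrightarrow> path_cost C b P f p = path_cost C b P f p0"
  unfolding U2_def by blast

lemma lam_eq:
  assumes "finite P" "feasible_flow P f" "feasible_flow P g"
    "\<forall>p\<in>P. 0 < f p \<longrightarrow> path_cost C s P f p = path_cost C s P f p0"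
    "\<forall>p\<in>P. 0 < g p \<longrightarrow> path_cost C s P g p = path_cost C s P g q0"
    "\<forall>e\<in>EEs P. edge_flow P f e = edge_flow P g e"
  shows "path_cost C s P f p0 = path_cost C s P g q0"
proof -
  have "path_cost C s P g q0 = (\<Sum>p\<in>P. path_cost C s P g p * g p)" using H[OF assms(3,5)] by simp
  also have "\<dots> = (\<Sum>p\<in>P. path_cost C s P f p * g p)"
    using cost_eq[OF assms(6)] by (intro sum.cong) simp_all
  also have "\<dots> = (\<Sum>p\<in>P. path_cost C s P f p * f p)" by (rule sum_edge_swap[OF assms(1,6)])
  also have "\<dots> = path_cost C s P f p0" using H[OF assms(2,4)] by simp
  finally show ?thesis by simp
qed

lemma TT_eq:
  assumes "finite P" "feasible_flow P f" "feasible_flow P g" "U2 C P a b f" "U2 C P a b g"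
    "\<forall>e\<in>EEs P. edge_flow P f e = edge_flow P g e"
  shows "TT C P a b f = TT C P a b g"
proof -
  obtain p0 where p0: "p0 \<in> P" "0 < f p0" using feas_ex assms by blast
  obtain q0 where q0: "q0 \<in> P" "0 < g q0" using feas_ex assms by blast
  have la: "path_cost C a P f p0 = path_cost C a P g q0"
    by (rule lam_eq[OF assms(1,2,3) U2_a[OF assms(4) p0] U2_a[OF assms(5) q0] assms(6)])
  have lb: "path_cost C b P f p0 = path_cost C b P g q0"
    by (rule lam_eq[OF assms(1,2,3) U2_b[OF assms(4) p0] U2_b[OF assms(5) q0] assms(6)])
  have ce: "\<And>w r. r \<in> P \<Longrightarrow> mix C P a b w f r = mix C P a b w g r"
    using cost_eq[OF assms(6)] by (simp add: mix_def)
  have "\<And>w. wardrop P (mix C P a b w) f \<longleftrightarrow> wardrop P (mix C P a b w) g"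
    unfolding W_char[OF assms(2,4) p0] W_char[OF assms(3,5) q0]
    using ce la lb p0 q0 by (simp add: mix_def)
  then show ?thesis by (simp add: TT_def)
qed

lemma TT_closed: "closed (TT C P a b f)"
proof (cases "feasible_flow P f")
  case False
  then have "TT C P a b f = {}" unfolding TT_def wardrop_def by blast
  then show ?thesis by simp
next
  case True
  have "TT C P a b f = {0..1} \<inter> (\<Inter>p\<in>{p\<in>P. 0 < f p}. \<Inter>r\<in>P. {w. mix C P a b w f p \<le> mix C P a b w f r})"
    using True unfolding TT_def wardrop_def by blast
  moreover have "closed ({0..1} \<inter> (\<Inter>p\<in>{p\<in>P. 0 < f p}. \<Inter>r\<in>P. {w::real. mix C P a b w f p \<le> mix C P a b w f r}))"
    unfolding mix_def
    apply (rule closed_Int)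
     apply simp
    apply (rule closed_INT, rule ballI, rule closed_INT, rule ballI)
    apply (rule closed_Collect_le)
     apply (intro continuous_intros)+
    done
  ultimately show ?thesis by simp
qed
lemma U2_U1: "U2 C P a b f \<Longrightarrow> \<forall>p\<in>P. \<forall>r\<in>P. 0 < f p \<longrightarrow> 0 < f r \<longrightarrow> path_cost C a P f p = path_cost C a P f r"
  unfolding U2_def by blast

lemma closed_Icc_from_Ioo:
  assumes "closed S" "{0<..<1::real} \<subseteq> S"
  shows "{0..1} \<subseteq> S"
proof -
  have "eventually (\<lambda>x. x \<in> S) (at_right (0::real))"
    using eventually_at_right_real[of 0 "1::real", simplified] by (rule eventually_mono) (use assms(2) in auto)
  then have z: "0 \<in> S"
    by (intro Lim_in_closed_set[OF assms(1), of "\<lambda>x. x" "at_right 0"]) auto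
  have "eventually (\<lambda>x. x \<in> S) (at_left (1::real))"
    using eventually_at_left_real[of 0 "1::real", simplified] by (rule eventually_mono) (use assms(2) in auto)
  then have o: "1 \<in> S"
    by (intro Lim_in_closed_set[OF assms(1), of "\<lambda>x. x" "at_left 1"]) auto
  show ?thesis
  proof
    fix x :: real assume "x \<in> {0..1}"
    then consider "x = 0" | "x = 1" | "x \<in> {0<..<1}" by force
    then show "x \<in> S" using z o assms(2) by cases auto
  qed
qed

lemma L7:
  assumes fin: "finite P" and sa: "SM C P a" and sb: "SM C P b"
    and ne: "{f. wardrop P (mix C P a b 0) f} \<noteq> {f. wardrop P (mix C P a b 1) f}"
  shows "\<exists>w. 0 < w \<and> w < 1 \<and> (\<forall>f. wardrop P (mix C P a b w) f \<longrightarrow>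
           (\<exists>p\<in>P. \<exists>r\<in>P. 0 < f p \<and> 0 < f r \<and> path_cost C a P f p \<noteq> path_cost C a P f r))"
proof (rule ccontr)
  assume na: "\<not> ?thesis"
  define G where "G = {f. feasible_flow P f \<and> U2 C P a b f}"
  define F where "F = TT C P a b ` G"
  have cover: "{0<..<1} \<subseteq> \<Union>F"
  proof
    fix w :: real assume "w \<in> {0<..<1}"
    then have w: "0 < w" "w < 1" by auto
    then obtain f where wf: "wardrop P (mix C P a b w) f"
      and u1: "\<forall>p\<in>P. \<forall>r\<in>P. 0 < f p \<longrightarrow> 0 < f r \<longrightarrow> path_cost C a P f p = path_cost C a P f r"
      using na by blast
    have "U2 C P a b f" unfolding U2_def
    proof (intro ballI impI conjI)
      fix p r assume pr: "p\<in>P" "r\<in>P" "0 < f p" "0 < f r"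
      show ea: "path_cost C a P f p = path_cost C a P f r" using u1 pr by blast
      have "mix C P a b w f p \<le> mix C P a b w f r" "mix C P a b w f r \<le> mix C P a b w f p"
        using wf pr unfolding wardrop_def by blast+
      then have "mix C P a b w f p = mix C P a b w f r" by simp
      then show "path_cost C b P f p = path_cost C b P f r" using ea w unfolding mix_def by simp
    qed
    then have "f \<in> G" using wf by (simp add: G_def wardrop_def)
    moreover have "w \<in> TT C P a b f" using wf w by (simp add: TT_def)
    ultimately show "w \<in> \<Union>F" by (auto simp: F_def)
  qed
  have finF: "finite F"
  proof -
    define rep where "rep U = (SOME f. f \<in> G \<and> supp P f = U)" for U
    have "F \<subseteq> (\<lambda>U. TT C P a b (rep U)) ` Pow P"
    proof
      fix X assume "X \<in> F"
      then obtain f where f: "f \<in> G" "X = TT C P a b f" by (auto simp: F_def)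
      have ex: "\<exists>g. g \<in> G \<and> supp P g = supp P f" using f by blast
      have r: "rep (supp P f) \<in> G \<and> supp P (rep (supp P f)) = supp P f"
        unfolding rep_def by (rule someI_ex[OF ex])
      let ?g = "rep (supp P f)"
      have fg: "feasible_flow P f" "U2 C P a b f" "feasible_flow P ?g" "U2 C P a b ?g"
        using f(1) r by (auto simp: G_def)
      have ee: "\<forall>e\<in>EEs P. edge_flow P ?g e = edge_flow P f e"
        by (rule L5[OF fin sa fg(3) fg(1) conjunct2[OF r] U2_U1[OF fg(4)] U2_U1[OF fg(2)]])
      have "TT C P a b ?g = TT C P a b f" by (rule TT_eq[OF fin fg(3,1,4,2) ee])
      moreover have "supp P f \<in> Pow P" by (auto simp: supp_def)
      ultimately show "X \<in> (\<lambda>U. TT C P a b (rep U)) ` Pow P" using f(2) by blast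
    qed
    then show ?thesis using fin by (meson finite_Pow_iff finite_imageI finite_subset)
  qed
  have inter: "TT C P a b f = TT C P a b g" if "f \<in> G" "g \<in> G" "w \<in> TT C P a b f" "w \<in> TT C P a b g" for f g w
  proof -
    have fg: "feasible_flow P f" "U2 C P a b f" "feasible_flow P g" "U2 C P a b g"
      using that by (auto simp: G_def)
    have w: "0 \<le> w" "w \<le> 1" "wardrop P (mix C P a b w) f" "wardrop P (mix C P a b w) g"
      using that by (auto simp: TT_def)
    show ?thesis by (rule TT_eq[OF fin fg(1,3,2,4) L4[OF fin sa sb w]])
  qed
  have w12: "(1/2::real) \<in> {0<..<1}" by simp
  then obtain f0 where f0: "f0 \<in> G" "1/2 \<in> TT C P a b f0" using cover unfolding F_def by blast
  define T0 where "T0 = TT C P a b f0"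
  define R where "R = \<Union>(F - {T0})"
  have T0F: "T0 \<in> F" using f0 by (simp add: F_def T0_def)
  have clT0: "closed T0" by (simp add: T0_def TT_closed)
  have clR: "closed R" unfolding R_def
    by (rule closed_Union) (use finF in \<open>auto simp: F_def TT_closed\<close>)
  have disj: "T0 \<inter> R = {}"
  proof (rule ccontr)
    assume "T0 \<inter> R \<noteq> {}"
    then obtain w X where "w \<in> T0" "X \<in> F" "X \<noteq> T0" "w \<in> X" by (auto simp: R_def)
    then obtain g where "g \<in> G" "X = TT C P a b g" by (auto simp: F_def)
    then show False using inter[OF f0(1) \<open>g \<in> G\<close>] \<open>w \<in> T0\<close> \<open>w \<in> X\<close> \<open>X \<noteq> T0\<close> by (auto simp: T0_def)
  qed
  have UF: "T0 \<union> R = \<Union>F" using T0F by (auto simp: R_def)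
  have "{0..1::real} \<subseteq> \<Union>F"
    by (rule closed_Icc_from_Ioo[OF _ cover]) (use UF clT0 clR in \<open>metis closed_Un\<close>)
  then have cov: "{0..1} \<subseteq> T0 \<union> R" using UF by simp
  have "T0 \<inter> {0..1} \<noteq> {}" using f0 by (auto simp: T0_def)
  then have "R \<inter> {0..1} = {}"
    using connected_closed[of "{0..1::real}"] connected_Icc[of "0::real" 1] clT0 clR cov disj by blast
  then have "{0..1} \<subseteq> T0" using cov by blast
  then have "(0::real) \<in> T0" "(1::real) \<in> T0" by auto
  then have w01: "wardrop P (mix C P a b 0) f0" "wardrop P (mix C P a b 1) f0"
    unfolding T0_def TT_def by auto
  have "{f. wardrop P (mix C P a b 0) f} = {f. wardrop P (mix C P a b 1) f}"
  proof (intro Collect_cong iffI)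
    fix g assume "wardrop P (mix C P a b 0) g"
    then show "wardrop P (mix C P a b 1) g" using L6[OF fin sa sb, of f0 g] w01 by (simp add: mix0 mix1)
  next
    fix g assume "wardrop P (mix C P a b 1) g"
    then show "wardrop P (mix C P a b 0) g" using L6[OF fin sb sa, of f0 g] w01 by (simp add: mix0 mix1)
  qed
  then show False using ne by simp
qed

lemma sumPhi:
  assumes "\<forall>s<m. F s = (if s = a then \<alpha> else if s = b then \<beta> else 0)" "a < m" "b < m" "a \<noteq> b"
  shows "(\<Sum>s<m. F s * Z s) = \<alpha> * Z a + \<beta> * (Z (b::nat) :: real)"
proof -
  have "(\<Sum>s<m. F s * Z s) = (\<Sum>s<m. (if s = a then \<alpha> * Z s else 0) + (if s = b then \<beta> * Z s else 0))"
    using assms(1,4) by (intro sum.cong) auto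
  also have "\<dots> = \<alpha> * Z a + \<beta> * Z b"
    using assms(2,3) by (simp add: sum.distrib)
  finally show ?thesis .
qed

lemma finite_od_paths:
  assumes "finite E"
  shows "finite (od_paths E vo vd)"
proof -
  let ?V = "insert vo (snd ` E)"
  have "od_paths E vo vd \<subseteq> {xs. set xs \<subseteq> ?V \<and> distinct xs}"
  proof
    fix vs assume vs: "vs \<in> od_paths E vo vd"
    have "set vs \<subseteq> ?V"
    proof
      fix x assume "x \<in> set vs"
      then obtain i where i: "i < length vs" "x = vs ! i" by (auto simp: in_set_conv_nth)
      show "x \<in> ?V"
      proof (cases i)
        case 0
        then show ?thesis using vs i by (auto simp: od_paths_def hd_conv_nth)
      next
        case (Suc j)
        then have "(vs ! j, vs ! (j + 1)) \<in> E" using vs i by (auto simp: od_paths_def)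
        then show ?thesis using i Suc by force
      qed
    qed
    then show "vs \<in> {xs. set xs \<subseteq> ?V \<and> distinct xs}" using vs by (auto simp: od_paths_def)
  qed
  moreover have "finite {xs. set xs \<subseteq> ?V \<and> distinct xs}"
    using assms by (intro finite_subset_distinct) auto
  ultimately show ?thesis by (rule finite_subset)
qed

lemma path_edges_sub:
  assumes "vs \<in> od_paths E vo vd"
  shows "path_edges vs \<subseteq> E"
proof
  fix e assume "e \<in> path_edges vs"
  then obtain n where n: "vs ! n = fst e" "tl vs ! n = snd e" "n < length vs" "n < length (tl vs)"
    by (auto simp: path_edges_def in_set_zip)
  then have "tl vs ! n = vs ! (n + 1)" by (simp add: nth_tl)
  have "n + 1 < length vs" using n by simp
  then have "(vs ! n, vs ! (n + 1)) \<in> E" using assms unfolding od_paths_def by blast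
  then show "e \<in> E" using n \<open>tl vs ! n = vs ! (n + 1)\<close> by (cases e) auto
qed

lemma WE_wardrop: "WE m C \<phi> P = {f. wardrop P (\<lambda>f p. exp_cost m C \<phi> P f p) f}"
  by (simp add: WE_def wardrop_def)

lemma exp_point: "s < m \<Longrightarrow> (\<lambda>f p. exp_cost m C (point_mass s) P f p) = (\<lambda>f p. path_cost C s P f p)"
proof -
  assume "s < m"
  have "\<And>f p. (\<Sum>t<m. point_mass s t * path_cost C t P f p) = (\<Sum>t<m. if t = s then path_cost C t P f p else 0)"
    by (intro sum.cong) (auto simp: point_mass_def)
  then show ?thesis using \<open>s < m\<close> by (simp add: exp_cost_def fun_eq_iff)
qed

lemma alg:
  fixes c w qa qb Da Db pa pb :: real
  assumes "c > 0" "0 < w" "w < 1" "qa > 0" "qb > 0" "Da \<noteq> 0"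
    "c*(1-w)/qa*(Da*pa) + c*w/qb*(Db*pb) = 0" "c*(1-w)/qa*(Da*qa) + c*w/qb*(Db*qb) = 0"
  shows "pa/qa = pb/qb"
proof -
  have e2: "c*w*Db = - (c*(1-w)*Da)" using assms(8,4,5) by simp
  have r1: "c*(1-w)/qa*(Da*pa) = c*(1-w)*Da*(pa/qa)" "c*w/qb*(Db*pb) = (c*w*Db)*(pb/qb)"
    by (simp_all add: field_simps)
  have e1: "c*(1-w)*Da*(pa/qa) + (c*w*Db)*(pb/qb) = 0" using assms(7) unfolding r1 .
  then have "c*(1-w)*Da*(pa/qa - pb/qb) = 0" unfolding e2 by (simp add: algebra_simps)
  then show ?thesis using assms(1,3,6) by simp
qed

lemma gen_sig:
  assumes "0 < sig_prob m q \<Phi> u"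
  shows "(\<Sum>s<m. \<Phi> u s * (path_cost C s P f p - path_cost C s P f r) * q s) =
     sig_prob m q \<Phi> u * (exp_cost m C (posterior m q \<Phi> u) P f p - exp_cost m C (posterior m q \<Phi> u) P f r)"
proof -
  let ?g = "sig_prob m q \<Phi> u"
  have "?g * (exp_cost m C (posterior m q \<Phi> u) P f p - exp_cost m C (posterior m q \<Phi> u) P f r)
      = (\<Sum>s<m. ?g * (posterior m q \<Phi> u s * (path_cost C s P f p - path_cost C s P f r)))"
    by (simp add: exp_cost_def sum_distrib_left sum_subtractf[symmetric] right_diff_distrib)
  also have "\<dots> = (\<Sum>s<m. \<Phi> u s * (path_cost C s P f p - path_cost C s P f r) * q s)"
    using assms by (intro sum.cong) (auto simp: posterior_def)
  finally show ?thesis by simp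
qed

theorem proposition1:
  fixes E :: "('v \<times> 'v) set" and vo vd :: 'v and m :: nat
    and C :: "nat \<Rightarrow> ('v \<times> 'v) \<Rightarrow> real \<Rightarrow> real" and q :: "nat \<Rightarrow> real"
  assumes "finite E"
    and "2 \<le> m"
    and "\<forall>s<m. \<forall>e\<in>E. continuous_on {0..} (C s e) \<and> strict_mono_on {0..} (C s e)
                      \<and> (\<forall>x\<ge>0. 0 \<le> C s e x)"
    and "q \<in> simplex m"
    and "\<forall>s<m. 0 < q s"
    and "WE m C (point_mass 0) (od_paths E vo vd) \<noteq> WE m C (point_mass 1) (od_paths E vo vd)"
  shows "\<exists>\<Phi>. signalling_scheme m m \<Phi> \<and> q_identifying m m C (od_paths E vo vd) q \<Phi>"
proof -
  define P where "P = od_paths E vo vd"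
  have fin: "finite P" using finite_od_paths[OF assms(1)] by (simp add: P_def)
  have EEsub: "EEs P \<subseteq> E" using path_edges_sub by (fastforce simp: EEs_def P_def)
  have SMs: "SM C P s" if "s < m" for s
    using assms(3) that EEsub unfolding SM_def by blast
  define W where "W s = WE m C (point_mass s) P" for s
  have W01: "W 0 \<noteq> W 1" using assms(6) by (simp add: W_def P_def)
  have Wmix0: "{f. wardrop P (mix C P a b 0) f} = W a" if "a < m" for a b
    unfolding W_def WE_wardrop exp_point[OF that] mix0 ..
  have Wmix1: "{f. wardrop P (mix C P a b 1) f} = W b" if "b < m" for a b
    unfolding W_def WE_wardrop exp_point[OF that] mix1 ..
  define pa where "pa u = (if u = 0 then 0 else u + 1)" for u :: nat
  define pb where "pb u = (if u = 0 then 1 else if W (u+1) \<noteq> W 0 then 0 else (1::nat))" for u :: nat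
  have pab: "pa u < m \<and> pb u < m \<and> pa u \<noteq> pb u \<and> W (pa u) \<noteq> W (pb u)" if "u < m - 1" for u
    using that assms(2) W01 by (auto simp: pa_def pb_def)
  define good where "good u w \<longleftrightarrow> 0 < w \<and> w < 1 \<and> (\<forall>f. wardrop P (mix C P (pa u) (pb u) w) f \<longrightarrow>
      (\<exists>p\<in>P. \<exists>r\<in>P. 0 < f p \<and> 0 < f r \<and> path_cost C (pa u) P f p \<noteq> path_cost C (pa u) P f r))" for u w
  have exg: "\<exists>w. good u w" if "u < m - 1" for u
  proof -
    have "{f. wardrop P (mix C P (pa u) (pb u) 0) f} \<noteq> {f. wardrop P (mix C P (pa u) (pb u) 1) f}"
      using pab[OF that] Wmix0 Wmix1 by simp
    then show ?thesis unfolding good_def using L7[OF fin SMs SMs] pab[OF that] by blast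
  qed
  define ww where "ww u = (SOME w. good u w)" for u
  have gw: "good u (ww u)" if "u < m - 1" for u
    unfolding ww_def by (rule someI_ex[OF exg[OF that]])
  define qmin where "qmin = Min (q ` {..<m})"
  have mpos: "0 < m" using assms(2) by simp
  have qmin: "0 < qmin" "\<And>s. s < m \<Longrightarrow> qmin \<le> q s"
  proof -
    have ne: "q ` {..<m} \<noteq> {}" using mpos by auto
    have "qmin \<in> q ` {..<m}" unfolding qmin_def by (rule Min_in[OF _ ne]) simp
    then show "0 < qmin" using assms(5) by auto
    show "\<And>s. s < m \<Longrightarrow> qmin \<le> q s" unfolding qmin_def by (rule Min_le) auto
  qed
  define c where "c = qmin / real m"
  have cpos: "0 < c" using qmin mpos by (simp add: c_def)
  have cbound: "real (m - 1) * (c / q s) \<le> 1" if "s < m" for s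
  proof -
    have qs: "0 < q s" using assms(5) that by simp
    have "real (m - 1) * (c / q s) = (real (m-1) / real m) * (qmin / q s)" by (simp add: c_def)
    also have "\<dots> \<le> 1 * 1"
      using qmin(2)[OF that] qs mpos qmin(1) by (intro mult_mono) (auto simp: divide_le_eq_1)
    finally show ?thesis by simp
  qed
  define \<Phi>0 where "\<Phi>0 u s = (if u < m - 1 \<and> s < m then (if s = pa u then c*(1 - ww u)/q s
      else if s = pb u then c * ww u / q s else 0) else 0)" for u s
  define \<Phi> where "\<Phi> u s = (if u < m - 1 then \<Phi>0 u s else if u = m - 1 then 1 - (\<Sum>v<m-1. \<Phi>0 v s) else 0)" for u s
  have \<Phi>0_nn: "0 \<le> \<Phi>0 u s" for u s
  proof (cases "u < m - 1 \<and> s < m")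
    case True
    then have "0 < ww u" "ww u < 1" "0 < q s" using gw assms(5) unfolding good_def by auto
    then show ?thesis using cpos by (auto simp: \<Phi>0_def intro!: divide_nonneg_pos)
  next
    case False
    show ?thesis unfolding \<Phi>0_def if_not_P[OF False] by simp
  qed
  have \<Phi>0_le: "\<Phi>0 u s \<le> c / q s" if sm: "s < m" for u s
  proof -
    have "c * (1 - ww u) / q s \<le> c / q s" if "u < m - 1" "s < m"
    proof -
      have w: "0 < ww u" "ww u < 1" "0 < q s" using gw[OF that(1)] assms(5) that(2) unfolding good_def by auto
      have "c * (1 - ww u) \<le> c * 1" by (rule mult_left_mono) (use w cpos in auto)
      then show ?thesis using w(3) by (simp add: divide_right_mono)
    qed
    moreover have "c * ww u / q s \<le> c / q s" if "u < m - 1" "s < m"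
    proof -
      have w: "0 < ww u" "ww u < 1" "0 < q s" using gw[OF that(1)] assms(5) that(2) unfolding good_def by auto
      have "c * ww u \<le> c * 1" by (rule mult_left_mono) (use w cpos in auto)
      then show ?thesis using w(3) by (simp add: divide_right_mono)
    qed
    moreover have "0 \<le> c / q s" if "s < m" using assms(5) that cpos by (simp add: less_imp_le)
    ultimately show ?thesis unfolding \<Phi>0_def using sm by auto
  qed
  have sum0: "(\<Sum>v<m-1. \<Phi>0 v s) \<le> 1" if "s < m" for s
  proof -
    have "(\<Sum>v<m-1. \<Phi>0 v s) \<le> (\<Sum>v<m-1. c / q s)" by (rule sum_mono) (rule \<Phi>0_le[OF that])
    also have "\<dots> = real (m-1) * (c / q s)" by simp
    also have "\<dots> \<le> 1" by (rule cbound[OF that])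
    finally show ?thesis .
  qed
  have scheme: "signalling_scheme m m \<Phi>"
    unfolding signalling_scheme_def
  proof (intro conjI allI impI)
    fix u s assume "u < m" "s < m"
    then show "0 \<le> \<Phi> u s" using \<Phi>0_nn sum0 by (auto simp: \<Phi>_def)
  next
    fix s assume s: "s < m"
    have "(\<Sum>u<m. \<Phi> u s) = (\<Sum>u<Suc (m-1). \<Phi> u s)" using mpos by simp
    also have "\<dots> = (\<Sum>u<m-1. \<Phi> u s) + \<Phi> (m-1) s" by (rule sum.lessThan_Suc)
    also have "(\<Sum>u<m-1. \<Phi> u s) = (\<Sum>u<m-1. \<Phi>0 u s)" by (intro sum.cong) (auto simp: \<Phi>_def)
    also have "\<Phi> (m-1) s = 1 - (\<Sum>v<m-1. \<Phi>0 v s)" by (simp add: \<Phi>_def)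
    finally show "(\<Sum>u<m. \<Phi> u s) = 1" by simp
  qed
  have \<Phi>u: "\<forall>s<m. \<Phi> u s = (if s = pa u then c*(1-ww u)/q (pa u) else if s = pb u then c*ww u/q (pb u) else 0)"
    if "u < m-1" for u
    using that by (auto simp: \<Phi>_def \<Phi>0_def)
  have sig: "sig_prob m q \<Phi> u = c" if "u < m-1" for u
  proof -
    have "sig_prob m q \<Phi> u = c*(1-ww u)/q (pa u) * q (pa u) + c*ww u/q (pb u) * q (pb u)"
      unfolding sig_prob_def by (rule sumPhi[OF \<Phi>u[OF that]]) (use pab[OF that] in auto)
    also have "\<dots> = c * (1 - ww u) + c * ww u"
    proof -
      have "q (pa u) \<noteq> 0" "q (pb u) \<noteq> 0" using assms(5) pab[OF that] by (auto simp: less_imp_neq[symmetric])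
      then show ?thesis by simp
    qed
    also have "\<dots> = c" by (simp add: algebra_simps)
    finally show ?thesis .
  qed
  have postmix: "(\<lambda>f p. exp_cost m C (posterior m q \<Phi> u) P f p) = mix C P (pa u) (pb u) (ww u)"
    if "u < m-1" for u
  proof -
    have post: "\<forall>s<m. posterior m q \<Phi> u s = (if s = pa u then 1 - ww u else if s = pb u then ww u else 0)"
      using \<Phi>u[OF that] sig[OF that] cpos assms(5) pab[OF that] by (auto simp: posterior_def)
    have "exp_cost m C (posterior m q \<Phi> u) P f p = mix C P (pa u) (pb u) (ww u) f p" for f p
      unfolding exp_cost_def mix_def by (rule sumPhi[OF post]) (use pab[OF that] in auto)
    then show ?thesis by (simp add: fun_eq_iff)
  qed
  have qid: "q_identifying m m C P q \<Phi>"
    unfolding q_identifying_def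
  proof (intro allI impI)
    fix ft assume hft: "\<forall>u<m. 0 < sig_prob m q \<Phi> u \<longrightarrow> ft u \<in> WE m C (posterior m q \<Phi> u) P"
    define S where "S u p r \<psi> = (\<Sum>s<m. \<Phi> u s * (path_cost C s P (ft u) p - path_cost C s P (ft u) r) * \<psi> s)"
      for u p r and \<psi> :: "nat \<Rightarrow> real"
    have Q_eq: "Q_set m m C P q \<Phi> ft = {\<psi> \<in> simplex m. \<forall>u<m. 0 < sig_prob m q \<Phi> u \<longrightarrow>
       (\<forall>p\<in>P. \<forall>r\<in>P. 0 < ft u p \<longrightarrow> (0 < ft u r \<longrightarrow> S u p r \<psi> = 0) \<and> (ft u r = 0 \<longrightarrow> S u p r \<psi> \<le> 0))}"
      by (simp add: Q_set_def S_def)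
    have we: "exp_cost m C (posterior m q \<Phi> u) P (ft u) p \<le> exp_cost m C (posterior m q \<Phi> u) P (ft u) r"
      if "u < m" "0 < sig_prob m q \<Phi> u" "p \<in> P" "0 < ft u p" "r \<in> P" for u p r
      using hft that unfolding WE_def by blast
    have qprop: "\<forall>u<m. 0 < sig_prob m q \<Phi> u \<longrightarrow>
       (\<forall>p\<in>P. \<forall>r\<in>P. 0 < ft u p \<longrightarrow> (0 < ft u r \<longrightarrow> S u p r q = 0) \<and> (ft u r = 0 \<longrightarrow> S u p r q \<le> 0))"
    proof (intro allI impI ballI)
      fix u p r assume u: "u < m" "0 < sig_prob m q \<Phi> u" and pr: "p \<in> P" "r \<in> P" "0 < ft u p"
      let ?e = "exp_cost m C (posterior m q \<Phi> u) P (ft u)"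
      have gs: "S u p r q = sig_prob m q \<Phi> u * (?e p - ?e r)"
        unfolding S_def by (rule gen_sig[OF u(2)])
      have le1: "?e p \<le> ?e r" using we[OF u pr(1,3,2)] .
      have A: "0 < ft u r \<longrightarrow> S u p r q = 0"
      proof
        assume "0 < ft u r"
        then have "?e r \<le> ?e p" using we[OF u pr(2) _ pr(1)] by blast
        then show "S u p r q = 0" using gs le1 by simp
      qed
      have B: "ft u r = 0 \<longrightarrow> S u p r q \<le> 0"
        using gs le1 u(2) by (simp add: mult_nonneg_nonpos)
      show "(0 < ft u r \<longrightarrow> S u p r q = 0) \<and> (ft u r = 0 \<longrightarrow> S u p r q \<le> 0)" using A B by blast
    qed
    have qin: "q \<in> Q_set m m C P q \<Phi> ft" unfolding Q_eq using assms(4) qprop by blast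
    have psi_eq: "\<psi> = q" if psiQ: "\<psi> \<in> Q_set m m C P q \<Phi> ft" for \<psi>
    proof -
      have \<psi>s: "\<psi> \<in> simplex m" and \<psi>c: "\<forall>u<m. 0 < sig_prob m q \<Phi> u \<longrightarrow>
       (\<forall>p\<in>P. \<forall>r\<in>P. 0 < ft u p \<longrightarrow> (0 < ft u r \<longrightarrow> S u p r \<psi> = 0) \<and> (ft u r = 0 \<longrightarrow> S u p r \<psi> \<le> 0))"
        using psiQ unfolding Q_eq by blast+
      have ratio: "\<psi> (pa u) / q (pa u) = \<psi> (pb u) / q (pb u)" if u: "u < m - 1" for u
      proof -
        have um: "u < m" using u by simp
        have sg: "0 < sig_prob m q \<Phi> u" using sig[OF u] cpos by simp
        have "ft u \<in> WE m C (posterior m q \<Phi> u) P" using hft um sg by blast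
        then have "wardrop P (mix C P (pa u) (pb u) (ww u)) (ft u)"
          using postmix[OF u] by (simp add: WE_wardrop)
        then obtain p r where pr: "p \<in> P" "r \<in> P" "0 < ft u p" "0 < ft u r"
          "path_cost C (pa u) P (ft u) p \<noteq> path_cost C (pa u) P (ft u) r"
          using gw[OF u] unfolding good_def by blast
        have e1: "S u p r \<psi> = 0" using \<psi>c um sg pr by blast
        have e2: "S u p r q = 0" using qprop um sg pr by blast
        define D where "D s = path_cost C s P (ft u) p - path_cost C s P (ft u) r" for s
        have S_form: "S u p r \<phi> = c*(1-ww u)/q (pa u) * (D (pa u) * \<phi> (pa u)) + c*ww u/q (pb u) * (D (pb u) * \<phi> (pb u))"
          for \<phi>
        proof -
          have "S u p r \<phi> = (\<Sum>s<m. \<Phi> u s * (D s * \<phi> s))"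
            unfolding S_def D_def by (simp add: mult.assoc)
          also have "\<dots> = c*(1-ww u)/q (pa u) * (D (pa u) * \<phi> (pa u)) + c*ww u/q (pb u) * (D (pb u) * \<phi> (pb u))"
            by (rule sumPhi[OF \<Phi>u[OF u]]) (use pab[OF u] in auto)
          finally show ?thesis .
        qed
        show ?thesis
        proof (rule alg[OF cpos])
          show "0 < ww u" "ww u < 1" using gw[OF u] by (auto simp: good_def)
          show "0 < q (pa u)" "0 < q (pb u)" using assms(5) pab[OF u] by auto
          show "D (pa u) \<noteq> 0" using pr(5) by (simp add: D_def)
          show "c * (1 - ww u) / q (pa u) * (D (pa u) * \<psi> (pa u)) + c * ww u / q (pb u) * (D (pb u) * \<psi> (pb u)) = 0"
            using e1 S_form by simp
          show "c * (1 - ww u) / q (pa u) * (D (pa u) * q (pa u)) + c * ww u / q (pb u) * (D (pb u) * q (pb u)) = 0"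
            using e2 S_form by simp
        qed
      qed
      define k where "k = \<psi> 0 / q 0"
      have r01: "\<psi> 1 / q 1 = k" using ratio[of 0] assms(2) by (simp add: k_def pa_def pb_def)
      have rk: "\<psi> s / q s = k" if "s < m" for s
      proof (cases "s < 2")
        case True
        then have "s = 0 \<or> s = 1" by auto
        then show ?thesis using r01 by (auto simp: k_def)
      next
        case False
        then have u: "s - 1 < m - 1" "s - 1 \<noteq> 0" using that by auto
        have "pa (s - 1) = s" using False by (simp add: pa_def)
        moreover have "pb (s - 1) = 0 \<or> pb (s - 1) = 1" by (simp add: pb_def)
        ultimately show ?thesis using ratio[OF u(1)] r01 by (auto simp: k_def)
      qed
      have \<psi>k: "\<psi> s = k * q s" if "s < m" for s
      proof -
        have "q s \<noteq> 0" using assms(5) that by (auto simp: less_imp_neq[symmetric])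
        then show ?thesis using rk[OF that] by (simp add: divide_eq_eq)
      qed
      have "1 = (\<Sum>s<m. \<psi> s)" using \<psi>s by (simp add: simplex_def)
      also have "\<dots> = k * (\<Sum>s<m. q s)" using \<psi>k by (simp add: sum_distrib_left)
      also have "\<dots> = k" using assms(4) by (simp add: simplex_def)
      finally have k1: "k = 1" by simp
      show "\<psi> = q"
      proof
        fix s show "\<psi> s = q s"
        proof (cases "s < m")
          case True then show ?thesis using \<psi>k k1 by simp
        next
          case False then show ?thesis using \<psi>s assms(4) by (simp add: simplex_def)
        qed
      qed
    qed
    show "Q_set m m C P q \<Phi> ft = {q}" using qin psi_eq by blast
  qed
  show ?thesis using scheme qid unfolding P_def by blast
qed

end
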